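(* For every $i\in\{1,\dots,n\}$, the control input $v_i(\mathbf p)=\mathrm{sat}(v_i^{\mathrm{ms}}(\mathbf p)+v_i^{\mathrm{cv}}(\mathbf p))$ is locally Lipschitz with respect to $\mathbf p$ on $\mathbb{R}^{dn}$.
   Context: Setting: $n\ge2$ robots in $\mathbb{R}^d$, positions $p_i\in\mathbb{R}^d$, configuration $\mathbf p=[p_1^\top,\dots,p_n^\top]^\top\in\mathbb{R}^{dn}$; fixed sample points $q_1,\dots,q_m\in\mathbb{R}^d$; constants $\beta>0$, $\sigma_1>0$, $\sigma_2>0$, $\varepsilon\in(0,1)$, $r_{\mathrm{avoid}}>0$, $v_{\max}>0$. Mass: $P_k(\mathbf p)=\frac1n\sum_{i=1}^n e^{-\beta\|q_k-p_i\|^2}$. Meanshift command: $v_i^{\mathrm{ms}}(\mathbf p)=\dfrac{\frac{\sigma_1}{m}\sum_{k=1}^m P_k(\mathbf p)^{-1}e^{-\beta\|q_k-p_i\|^2}(q_k-p_i)}{\sum_{k=1}^m P_k(\mathbf p)^{-1}e^{-\beta\|q_k-p_i\|^2}}$. Repulsive term: $\tilde v_i^{\mathrm{cv}}=\sigma_2\sum_{j\ne i,\ \|p_i-p_j\|\le r_{\mathrm{avoid}}}\frac{r_{\mathrm{avoid}}-\|p_i-p_j\|}{\|p_i-p_j\|+\varepsilon}(p_i-p_j)$. With $\varphi=\min\{\|v_i^{\mathrm{ms}}\|^2/\varepsilon,1\}$, the gain is $\kappa_2=\varphi$ if $(v_i^{\mathrm{ms}})^\top\tilde v_i^{\mathrm{cv}}\ge0$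 and $\kappa_2=\varphi\min\{-(1-\varepsilon)\|v_i^{\mathrm{ms}}\|^2/((v_i^{\mathrm{ms}})^\top\tilde v_i^{\mathrm{cv}}),1\}$ if $(v_i^{\mathrm{ms}})^\top\tilde v_i^{\mathrm{cv}}<0$; collision-avoidance command $v_i^{\mathrm{cv}}=\kappa_2\tilde v_i^{\mathrm{cv}}$. Saturation: $\mathrm{sat}(z)=v_{\max}z/\|z\|$ if $\|z\|>v_{\max}$, and $\mathrm{sat}(z)=z$ otherwise. *)

theory Defs
  imports "HOL-Analysis.Analysis"
begin

text \<open>Robots are indexed by a finite type 'n (n = CARD('n)), positions live in
  real^'d (d = CARD('d)); a configuration is p :: real^'d^'n, i.e. an element of R^{dn}
  with the Euclidean norm.  Sample points are indexed by a finite type 'k (m = CARD('k)).\<close>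

definition locally_lipschitz_on :: "'a::metric_space set \<Rightarrow> ('a \<Rightarrow> 'b::metric_space) \<Rightarrow> bool" where
  "locally_lipschitz_on X f \<longleftrightarrow>
     (\<forall>x\<in>X. \<exists>u>0. \<exists>L. L-lipschitz_on (cball x u \<inter> X) f)"

definition mass :: "real \<Rightarrow> ('k::finite \<Rightarrow> real^'d) \<Rightarrow> real^'d^'n::finite \<Rightarrow> 'k \<Rightarrow> real" where
  "mass \<beta> q p k = (1 / real CARD('n)) * (\<Sum>i\<in>UNIV. exp (- \<beta> * (norm (q k - p $ i))\<^sup>2))"

definition v_ms :: "real \<Rightarrow> real \<Rightarrow> ('k::finite \<Rightarrow> real^'d) \<Rightarrow> real^'d^'n::finite \<Rightarrow> 'n \<Rightarrow> real^'d" where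
  "v_ms \<beta> \<sigma>1 q p i =
     (let w = (\<lambda>k. inverse (mass \<beta> q p k) * exp (- \<beta> * (norm (q k - p $ i))\<^sup>2))
      in (1 / (\<Sum>k\<in>UNIV. w k)) *\<^sub>R ((\<sigma>1 / real CARD('k)) *\<^sub>R (\<Sum>k\<in>UNIV. w k *\<^sub>R (q k - p $ i))))"

definition v_rep :: "real \<Rightarrow> real \<Rightarrow> real \<Rightarrow> real^'d^'n::finite \<Rightarrow> 'n \<Rightarrow> real^'d" where
  "v_rep \<sigma>2 \<epsilon> r_avoid p i =
     \<sigma>2 *\<^sub>R (\<Sum>j\<in>{j. j \<noteq> i \<and> norm (p $ i - p $ j) \<le> r_avoid}.
        ((r_avoid - norm (p $ i - p $ j)) / (norm (p $ i - p $ j) + \<epsilon>)) *\<^sub>R (p $ i - p $ j))"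

definition kappa2 :: "real \<Rightarrow> real^'d \<Rightarrow> real^'d \<Rightarrow> real" where
  "kappa2 \<epsilon> vms vt =
     (let \<phi> = min ((norm vms)\<^sup>2 / \<epsilon>) 1
      in if vms \<bullet> vt \<ge> 0 then \<phi>
         else \<phi> * min (- (1 - \<epsilon>) * (norm vms)\<^sup>2 / (vms \<bullet> vt)) 1)"

definition v_cv :: "real \<Rightarrow> real \<Rightarrow> real \<Rightarrow> real \<Rightarrow> real \<Rightarrow> ('k::finite \<Rightarrow> real^'d)
    \<Rightarrow> real^'d^'n::finite \<Rightarrow> 'n \<Rightarrow> real^'d" where
  "v_cv \<beta> \<sigma>1 \<sigma>2 \<epsilon> r_avoid q p i =
     kappa2 \<epsilon> (v_ms \<beta> \<sigma>1 q p i) (v_rep \<sigma>2 \<epsilon> r_avoid p i) *\<^sub>R v_rep \<sigma>2 \<epsilon> r_avoid p i"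

definition sat :: "real \<Rightarrow> real^'d \<Rightarrow> real^'d" where
  "sat v_max z = (if norm z > v_max then (v_max / norm z) *\<^sub>R z else z)"

definition control :: "real \<Rightarrow> real \<Rightarrow> real \<Rightarrow> real \<Rightarrow> real \<Rightarrow> real \<Rightarrow> ('k::finite \<Rightarrow> real^'d)
    \<Rightarrow> real^'d^'n::finite \<Rightarrow> 'n \<Rightarrow> real^'d" where
  "control \<beta> \<sigma>1 \<sigma>2 \<epsilon> r_avoid v_max q p i =
     sat v_max (v_ms \<beta> \<sigma>1 q p i + v_cv \<beta> \<sigma>1 \<sigma>2 \<epsilon> r_avoid q p i)"

end

theory Submission
  imports Defs
begin


definition LL :: "('a::metric_space \<Rightarrow> 'b::metric_space) \<Rightarrow> bool" where
  "LL f \<longleftrightarrow> (\<forall>x. \<exists>u>0. \<exists>L. L-lipschitz_on (cball x u) f)"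

lemma LLI:
  assumes "\<And>x. \<exists>u>0. \<exists>L. \<forall>y\<in>cball x u. \<forall>z\<in>cball x u. dist (f y) (f z) \<le> L * dist y z"
  shows "LL f"
  unfolding LL_def
proof
  fix x
  obtain u L where u: "u > 0" and h: "\<forall>y\<in>cball x u. \<forall>z\<in>cball x u. dist (f y) (f z) \<le> L * dist y z"
    using assms by blast
  have "(max L 0)-lipschitz_on (cball x u) f"
  proof (rule lipschitz_onI)
    fix y z assume "y \<in> cball x u" "z \<in> cball x u"
    then have "dist (f y) (f z) \<le> L * dist y z" using h by blast
    also have "\<dots> \<le> max L 0 * dist y z" by (simp add: mult_right_mono)
    finally show "dist (f y) (f z) \<le> max L 0 * dist y z" .
  qed simp
  then show "\<exists>u>0. \<exists>L. L-lipschitz_on (cball x u) f" using u by blast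
qed

lemma LLD:
  assumes "LL f"
  obtains u L where "u > 0" "L \<ge> 0" "L-lipschitz_on (cball x u) f"
  using assms unfolding LL_def by (meson lipschitz_on_nonneg)

lemma LL_global: "L-lipschitz_on UNIV f \<Longrightarrow> LL f"
  unfolding LL_def by (meson lipschitz_on_subset subset_UNIV zero_less_one)

lemma LL_const: "LL (\<lambda>x. c)"
  by (rule LL_global[OF lipschitz_on_constant])

lemma LL_id: "LL (\<lambda>x. x)"
  by (rule LL_global[OF lipschitz_on_id])

lemma LL_compose:
  assumes f: "LL f" and g: "LL g"
  shows "LL (\<lambda>x. g (f x))"
  unfolding LL_def
proof
  fix x
  obtain u L where u: "u > 0" "L \<ge> 0" and fl: "L-lipschitz_on (cball x u) f" using LLD[OF f] by blast
  obtain v M where v: "v > 0" "M \<ge> 0" and gl: "M-lipschitz_on (cball (f x) v) g" using LLD[OF g] by blast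
  define r where "r = min u (v / (L + 1))"
  have r: "r > 0" using u v by (simp add: r_def)
  have sub: "cball x r \<subseteq> cball x u" unfolding r_def by (intro subset_cball) simp
  have fl2: "L-lipschitz_on (cball x r) f" using lipschitz_on_subset[OF fl sub] .
  have img: "f ` cball x r \<subseteq> cball (f x) v"
  proof
    fix w assume "w \<in> f ` cball x r"
    then obtain y where y: "y \<in> cball x r" "w = f y" by blast
    have "dist (f x) (f y) \<le> L * dist x y"
      using lipschitz_onD[OF fl2] y(1) r by simp
    also have "\<dots> \<le> L * (v / (L + 1))"
      using y(1) u by (intro mult_left_mono) (auto simp: r_def)
    also have "\<dots> \<le> v" using u v by (simp add: field_simps)
    finally show "w \<in> cball (f x) v" using y by simp
  qed
  have "(M * L)-lipschitz_on (cball x r) (\<lambda>x. g (f x))"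
    by (rule lipschitz_on_compose2[OF fl2 lipschitz_on_subset[OF gl img]])
  then show "\<exists>u>0. \<exists>L. L-lipschitz_on (cball x u) (\<lambda>x. g (f x))" using r by blast
qed

lemma LL_bound3:
  fixes f :: "'a::metric_space \<Rightarrow> 'b::metric_space"
    and ga :: "'a \<Rightarrow> 'c::metric_space" and gb :: "'a \<Rightarrow> 'd::metric_space"
    and gc :: "'a \<Rightarrow> 'e::metric_space"
  assumes "LL ga" "LL gb" "LL gc"
    and C: "\<And>y z. dist (f y) (f z) \<le> C * (dist (ga y) (ga z) + dist (gb y) (gb z) + dist (gc y) (gc z))"
  shows "LL f"
proof (rule LLI)
  fix x
  obtain u1 L1 where u1: "u1 > 0" "L1 \<ge> 0" "L1-lipschitz_on (cball x u1) ga" using LLD[OF assms(1)] by blast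
  obtain u2 L2 where u2: "u2 > 0" "L2 \<ge> 0" "L2-lipschitz_on (cball x u2) gb" using LLD[OF assms(2)] by blast
  obtain u3 L3 where u3: "u3 > 0" "L3 \<ge> 0" "L3-lipschitz_on (cball x u3) gc" using LLD[OF assms(3)] by blast
  define r where "r = min u1 (min u2 u3)"
  have "r > 0" using u1 u2 u3 by (simp add: r_def)
  moreover have "\<forall>y\<in>cball x r. \<forall>z\<in>cball x r. dist (f y) (f z) \<le> (max C 0 * (L1 + L2 + L3)) * dist y z"
  proof (intro ballI)
    fix y z assume yz: "y \<in> cball x r" "z \<in> cball x r"
    have a1: "dist (ga y) (ga z) \<le> L1 * dist y z"
      by (rule lipschitz_onD[OF u1(3)]) (use yz in \<open>auto simp: r_def\<close>)
    have a2: "dist (gb y) (gb z) \<le> L2 * dist y z"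
      by (rule lipschitz_onD[OF u2(3)]) (use yz in \<open>auto simp: r_def\<close>)
    have a3: "dist (gc y) (gc z) \<le> L3 * dist y z"
      by (rule lipschitz_onD[OF u3(3)]) (use yz in \<open>auto simp: r_def\<close>)
    have "dist (f y) (f z) \<le> max C 0 * (dist (ga y) (ga z) + dist (gb y) (gb z) + dist (gc y) (gc z))"
      using C[of y z] by (smt (verit) mult_right_mono zero_le_dist)
    also have "\<dots> \<le> max C 0 * ((L1 + L2 + L3) * dist y z)"
      using a1 a2 a3 by (intro mult_left_mono) (auto simp: algebra_simps)
    finally show "dist (f y) (f z) \<le> (max C 0 * (L1 + L2 + L3)) * dist y z" by simp
  qed
  ultimately show "\<exists>u>0. \<exists>L. \<forall>y\<in>cball x u. \<forall>z\<in>cball x u. dist (f y) (f z) \<le> L * dist y z"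
    by blast
qed

lemma LL_bilinear:
  fixes f :: "'a::metric_space \<Rightarrow> 'b::real_normed_vector" and g :: "'a \<Rightarrow> 'c::real_normed_vector"
  assumes bb: "bounded_bilinear bop" and f: "LL f" and g: "LL g"
  shows "LL (\<lambda>x. bop (f x) (g x))"
proof (rule LLI)
  fix x
  obtain u1 L1 where u1: "u1 > 0" "L1 \<ge> 0" "L1-lipschitz_on (cball x u1) f" using LLD[OF f] by blast
  obtain u2 L2 where u2: "u2 > 0" "L2 \<ge> 0" "L2-lipschitz_on (cball x u2) g" using LLD[OF g] by blast
  obtain K where K: "K > 0" "\<And>a b. norm (bop a b) \<le> norm a * norm b * K"
    using bounded_bilinear.pos_bounded[OF bb] by blast
  define r where "r = min u1 u2"
  define A where "A = norm (f x) + L1 * r"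
  define B where "B = norm (g x) + L2 * r"
  have r: "r > 0" using u1 u2 by (simp add: r_def)
  have fb: "norm (f y) \<le> A" if "y \<in> cball x r" for y
  proof -
    have "dist (f x) (f y) \<le> L1 * dist x y"
      by (rule lipschitz_onD[OF u1(3)]) (use that r in \<open>auto simp: r_def\<close>)
    also have "\<dots> \<le> L1 * r" using that u1 by (intro mult_left_mono) auto
    finally show ?thesis unfolding A_def by (smt (verit) dist_norm norm_triangle_ineq2 norm_minus_commute)
  qed
  have gb: "norm (g y) \<le> B" if "y \<in> cball x r" for y
  proof -
    have "dist (g x) (g y) \<le> L2 * dist x y"
      by (rule lipschitz_onD[OF u2(3)]) (use that r in \<open>auto simp: r_def\<close>)
    also have "\<dots> \<le> L2 * r" using that u2 by (intro mult_left_mono) auto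
    finally show ?thesis unfolding B_def by (smt (verit) dist_norm norm_triangle_ineq2 norm_minus_commute)
  qed
  have "\<forall>y\<in>cball x r. \<forall>z\<in>cball x r. dist (bop (f y) (g y)) (bop (f z) (g z)) \<le> (K * (L1 * B + A * L2)) * dist y z"
  proof (intro ballI)
    fix y z assume yz: "y \<in> cball x r" "z \<in> cball x r"
    have a1: "norm (f y - f z) \<le> L1 * dist y z"
      using lipschitz_onD[OF u1(3)] yz by (auto simp: r_def dist_norm)
    have a2: "norm (g y - g z) \<le> L2 * dist y z"
      using lipschitz_onD[OF u2(3)] yz by (auto simp: r_def dist_norm)
    have eq: "bop (f y) (g y) - bop (f z) (g z) = bop (f y - f z) (g y) + bop (f z) (g y - g z)"
      by (simp add: bounded_bilinear.diff_left[OF bb] bounded_bilinear.diff_right[OF bb])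
    have "dist (bop (f y) (g y)) (bop (f z) (g z)) \<le> norm (bop (f y - f z) (g y)) + norm (bop (f z) (g y - g z))"
      by (simp add: dist_norm eq norm_triangle_ineq)
    also have "\<dots> \<le> norm (f y - f z) * norm (g y) * K + norm (f z) * norm (g y - g z) * K"
      using K(2) by (intro add_mono) auto
    also have "\<dots> \<le> (L1 * dist y z) * B * K + A * (L2 * dist y z) * K"
      using K(1) a1 a2 fb[OF yz(2)] gb[OF yz(1)]
        order_trans[OF norm_ge_zero a1] order_trans[OF norm_ge_zero fb[OF yz(2)]]
      by (intro add_mono mult_right_mono mult_mono) auto
    also have "\<dots> = (K * (L1 * B + A * L2)) * dist y z" by (simp add: algebra_simps)
    finally show "dist (bop (f y) (g y)) (bop (f z) (g z)) \<le> (K * (L1 * B + A * L2)) * dist y z" .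
  qed
  then show "\<exists>u>0. \<exists>L. \<forall>y\<in>cball x u. \<forall>z\<in>cball x u. dist (bop (f y) (g y)) (bop (f z) (g z)) \<le> L * dist y z"
    using r by blast
qed

lemma LL_scaleR: "LL (f::_\<Rightarrow>real) \<Longrightarrow> LL (g::_\<Rightarrow>'b::real_normed_vector) \<Longrightarrow> LL (\<lambda>x. f x *\<^sub>R g x)"
  by (rule LL_bilinear[OF bounded_bilinear_scaleR])

lemma LL_mult: "LL (f::_\<Rightarrow>real) \<Longrightarrow> LL (g::_\<Rightarrow>real) \<Longrightarrow> LL (\<lambda>x. f x * g x)"
  by (rule LL_bilinear[OF bounded_bilinear_mult])

lemma LL_inner: "LL (f::_\<Rightarrow>'b::real_inner) \<Longrightarrow> LL g \<Longrightarrow> LL (\<lambda>x. inner (f x) (g x))"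
  by (rule LL_bilinear[OF bounded_bilinear_inner])

lemma LL_add:
  fixes f g :: "'a::metric_space \<Rightarrow> 'b::real_normed_vector"
  assumes "LL f" "LL g" shows "LL (\<lambda>x. f x + g x)"
  by (rule LL_bound3[OF assms LL_const[of 0], where C=1]) (simp add: dist_triangle_add)

lemma LL_minus:
  fixes f :: "'a::metric_space \<Rightarrow> 'b::real_normed_vector"
  assumes "LL f" shows "LL (\<lambda>x. - f x)"
  by (rule LL_bound3[OF assms LL_const[of 0] LL_const[of 0], where C=1]) (simp add: dist_minus)

lemma LL_diff:
  fixes f g :: "'a::metric_space \<Rightarrow> 'b::real_normed_vector"
  assumes "LL f" "LL g" shows "LL (\<lambda>x. f x - g x)"
  using LL_add[OF assms(1) LL_minus[OF assms(2)]] by simp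

lemma LL_sum:
  fixes f :: "'i \<Rightarrow> 'a::metric_space \<Rightarrow> 'b::real_normed_vector"
  assumes "finite S" "\<And>j. j \<in> S \<Longrightarrow> LL (f j)"
  shows "LL (\<lambda>x. \<Sum>j\<in>S. f j x)"
  using assms
proof (induction S rule: finite_induct)
  case empty then show ?case by (simp add: LL_const)
next
  case (insert a S)
  then show ?case by (simp add: LL_add)
qed

lemma LL_norm: "LL (f::_\<Rightarrow>'b::real_normed_vector) \<Longrightarrow> LL (\<lambda>x. norm (f x))"
  by (rule LL_bound3[OF _ LL_const[of "0::real"] LL_const[of "0::real"], where C=1])
     (auto simp: dist_norm norm_triangle_ineq3)

lemma LL_max: "LL (f::_\<Rightarrow>real) \<Longrightarrow> LL (g::_\<Rightarrow>real) \<Longrightarrow> LL (\<lambda>x. max (f x) (g x))"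
  by (rule LL_bound3[where ga=f and gb=g and gc="\<lambda>_. 0::real" and C=1]) (auto simp: LL_const dist_real_def)

lemma LL_min: "LL (f::_\<Rightarrow>real) \<Longrightarrow> LL (g::_\<Rightarrow>real) \<Longrightarrow> LL (\<lambda>x. min (f x) (g x))"
  by (rule LL_bound3[where ga=f and gb=g and gc="\<lambda>_. 0::real" and C=1]) (auto simp: LL_const dist_real_def)

lemma LL_inv_pos:
  fixes f :: "'a::metric_space \<Rightarrow> real"
  assumes f: "LL f" and pos: "\<And>x. f x > 0"
  shows "LL (\<lambda>x. 1 / f x)"
proof (rule LLI)
  fix x
  obtain u L where u: "u > 0" "L \<ge> 0" "L-lipschitz_on (cball x u) f" using LLD[OF f] by blast
  define r where "r = min u (f x / (2 * (L + 1)))"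
  have fx: "f x > 0" using pos by simp
  have r: "r > 0" using u fx by (simp add: r_def)
  have lb: "f y \<ge> f x / 2" if "y \<in> cball x r" for y
  proof -
    have "dist (f x) (f y) \<le> L * dist x y"
      by (rule lipschitz_onD[OF u(3)]) (use that r in \<open>auto simp: r_def\<close>)
    also have "\<dots> \<le> L * (f x / (2 * (L + 1)))" using that u by (intro mult_left_mono) (auto simp: r_def)
    also have "\<dots> \<le> f x / 2" using u fx by (simp add: field_simps)
    finally have "\<bar>f x - f y\<bar> \<le> f x / 2" by (simp add: dist_real_def)
    then show ?thesis by linarith
  qed
  have "\<forall>y\<in>cball x r. \<forall>z\<in>cball x r. dist (1 / f y) (1 / f z) \<le> (4 * L / (f x)^2) * dist y z"
  proof (intro ballI)
    fix y z assume yz: "y \<in> cball x r" "z \<in> cball x r"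
    have a: "\<bar>f y - f z\<bar> \<le> L * dist y z"
      using lipschitz_onD[OF u(3)] yz by (auto simp: r_def dist_real_def)
    have py: "f y > 0" and pz: "f z > 0" using pos by auto
    have "dist (1 / f y) (1 / f z) = \<bar>f y - f z\<bar> / (f y * f z)"
      using py pz by (simp add: dist_real_def field_simps abs_minus_commute)
    also have "\<dots> \<le> \<bar>f y - f z\<bar> / ((f x / 2) * (f x / 2))"
      using lb[OF yz(1)] lb[OF yz(2)] fx
      by (intro divide_left_mono mult_mono mult_pos_pos) auto
    also have "\<dots> = 4 * \<bar>f y - f z\<bar> / (f x)^2" by (simp add: power2_eq_square field_simps)
    also have "\<dots> \<le> 4 * (L * dist y z) / (f x)^2" using a fx by (intro divide_right_mono) auto
    finally show "dist (1 / f y) (1 / f z) \<le> (4 * L / (f x)^2) * dist y z" by simp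
  qed
  then show "\<exists>u>0. \<exists>L. \<forall>y\<in>cball x u. \<forall>z\<in>cball x u. dist (1 / f y) (1 / f z) \<le> L * dist y z"
    using r by blast
qed

lemma LL_divide_pos:
  fixes f g :: "'a::metric_space \<Rightarrow> real"
  assumes "LL f" "LL g" "\<And>x. g x > 0"
  shows "LL (\<lambda>x. f x / g x)"
  using LL_mult[OF assms(1) LL_inv_pos[OF assms(2,3)]] by simp

lemma exp_dist: "\<bar>exp (a::real) - exp b\<bar> \<le> exp (max a b) * \<bar>a - b\<bar>"
proof -
  have *: "exp x - exp y \<le> exp x * (x - y)" if "y \<le> x" for x y :: real
  proof -
    have "exp (y - x) \<ge> 1 + (y - x)" by (rule exp_ge_add_one_self)
    then have "exp x * exp (y - x) \<ge> exp x * (1 + (y - x))" by (intro mult_left_mono) auto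
    then show ?thesis by (simp add: exp_diff algebra_simps)
  qed
  show ?thesis
  proof (cases "b \<le> a")
    case True then show ?thesis using *[of b a] True by (simp add: max_def)
  next
    case False then show ?thesis using *[of a b] by (simp add: max_def abs_minus_commute)
  qed
qed

lemma LL_exp_real: "LL (\<lambda>x::real. exp x)"
proof (rule LLI)
  fix x :: real
  have "\<forall>y\<in>cball x 1. \<forall>z\<in>cball x 1. dist (exp y) (exp z) \<le> exp (x + 1) * dist y z"
  proof (intro ballI)
    fix y z assume "y \<in> cball x 1" "z \<in> cball x 1"
    then have "max y z \<le> x + 1" by (auto simp: dist_real_def)
    then have "exp (max y z) * \<bar>y - z\<bar> \<le> exp (x + 1) * \<bar>y - z\<bar>" by (intro mult_right_mono) auto
    then show "dist (exp y) (exp z) \<le> exp (x + 1) * dist y z"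
      using exp_dist[of y z] by (simp add: dist_real_def)
  qed
  then show "\<exists>u>0. \<exists>L. \<forall>y\<in>cball x u. \<forall>z\<in>cball x u. dist (exp y) (exp z) \<le> L * dist y z"
    by (intro exI[of _ 1]) auto
qed

lemma LL_exp: "LL (f::_\<Rightarrow>real) \<Longrightarrow> LL (\<lambda>x. exp (f x))"
  by (rule LL_compose[OF _ LL_exp_real])

lemma LL_nth: "LL (\<lambda>p::real^'d^'n. p $ i)"
  by (rule LL_global[of 1]) (auto intro!: lipschitz_onI simp: dist_vec_nth_le)


lemma LL_pow2: "LL (f::_\<Rightarrow>real) \<Longrightarrow> LL (\<lambda>x. (f x)^2)"
  using LL_mult[of f f] by (simp add: power2_eq_square)

lemma key_main:
  fixes M1 M2 E1 E2 c :: real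
  assumes c: "c > 0" and m: "0 < M2" "M2 \<le> M1" and e: "E1 \<ge> c * M1" "E2 \<ge> c * M2"
  shows "M2 * \<bar>c * M1 / E1 - c * M2 / E2\<bar> \<le> \<bar>M1 - M2\<bar> + \<bar>E1 - E2\<bar> / c"
proof -
  have cm: "c * M2 \<le> c * M1" using m c by simp
  have E1: "E1 > 0" and E2: "E2 > 0"
    using m e c cm by (smt (verit) mult_pos_pos)+
  define a1 where "a1 = c * M2 / E1"
  define a2 where "a2 = c * M2 / E2"
  have eq: "c * M1 / E1 - c * M2 / E2 = a1 * (M1 - M2) / M2 + a2 * a1 * (E2 - E1) / (c * M2)"
    unfolding a1_def a2_def using E1 E2 m c by (simp add: field_simps)
  have t1: "a1 \<le> 1" unfolding a1_def using E1 cm e by (simp add: pos_divide_le_eq)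
  have t2: "a2 \<le> 1" unfolding a2_def using E2 e by (simp add: pos_divide_le_eq)
  have p1: "a1 \<ge> 0" "a2 \<ge> 0" unfolding a1_def a2_def using E1 E2 m c by auto
  have "M2 * \<bar>c * M1 / E1 - c * M2 / E2\<bar> \<le> M2 * (\<bar>a1 * (M1 - M2) / M2\<bar> + \<bar>a2 * a1 * (E2 - E1) / (c * M2)\<bar>)"
    unfolding eq using m by (intro mult_left_mono abs_triangle_ineq) auto
  also have "\<dots> = a1 * \<bar>M1 - M2\<bar> + a2 * a1 * (\<bar>E2 - E1\<bar> / c)"
    using m p1 c by (simp add: abs_mult abs_divide distrib_left)
  also have "\<dots> \<le> 1 * \<bar>M1 - M2\<bar> + 1 * 1 * (\<bar>E2 - E1\<bar> / c)"
    using t1 t2 p1 c by (intro add_mono mult_right_mono mult_mono) auto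
  finally show ?thesis by (simp add: abs_minus_commute)
qed

lemma key_real:
  fixes N1 N2 D1 D2 c :: real
  assumes c: "c > 0" and n1: "N1 \<ge> 0" and n2: "N2 \<ge> 0"
    and d1: "D1 \<ge> c * N1" and d2: "D2 \<ge> c * N2"
  shows "min N1 N2 * \<bar>(if N1 = 0 then 0 else c * N1 / D1) - (if N2 = 0 then 0 else c * N2 / D2)\<bar>
           \<le> \<bar>N1 - N2\<bar> + \<bar>D1 - D2\<bar> / c"
proof (cases "N1 = 0 \<or> N2 = 0")
  case True
  then have "min N1 N2 = 0" using n1 n2 by auto
  moreover have "0 \<le> \<bar>N1 - N2\<bar> + \<bar>D1 - D2\<bar> / c" using c by simp
  ultimately show ?thesis by (simp only: mult_zero_left)
next
  case False
  then have p: "N1 > 0" "N2 > 0" "N1 \<noteq> 0" "N2 \<noteq> 0" using n1 n2 by auto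
  have h: "(if N1 = 0 then 0 else c * N1 / D1) = c * N1 / D1" "(if N2 = 0 then 0 else c * N2 / D2) = c * N2 / D2"
    using p by simp_all
  show ?thesis
  proof (cases "N2 \<le> N1")
    case True
    then have "min N1 N2 = N2" by simp
    then show ?thesis unfolding h using key_main[OF c p(2) True d1 d2] by simp
  next
    case F: False
    then have m: "min N1 N2 = N1" "N1 \<le> N2" by simp_all
    have "N1 * \<bar>c * N2 / D2 - c * N1 / D1\<bar> \<le> \<bar>N2 - N1\<bar> + \<bar>D2 - D1\<bar> / c"
      using key_main[OF c p(1) m(2) d2 d1] .
    then show ?thesis unfolding h m(1) by (simp only: abs_minus_commute)
  qed
qed


lemma comb_real:
  fixes p1 p2 h1 h2 N1 N2 e :: real
  assumes a: "0 \<le> p1" "0 \<le> p2" "p1 \<le> N1 / e" "p2 \<le> N2 / e" "0 \<le> h1" "h1 \<le> 1" "0 \<le> h2" "h2 \<le> 1" "e > 0"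
  shows "\<bar>p1 * h1 - p2 * h2\<bar> \<le> \<bar>p1 - p2\<bar> + min N1 N2 / e * \<bar>h1 - h2\<bar>"
proof (cases "N2 \<le> N1")
  case True
  have "\<bar>p1 * h1 - p2 * h2\<bar> = \<bar>(p1 - p2) * h1 + p2 * (h1 - h2)\<bar>" by (simp add: algebra_simps)
  also have "\<dots> \<le> \<bar>(p1 - p2) * h1\<bar> + \<bar>p2 * (h1 - h2)\<bar>" by (rule abs_triangle_ineq)
  also have "\<dots> = \<bar>p1 - p2\<bar> * h1 + p2 * \<bar>h1 - h2\<bar>"
    using a by (simp add: abs_mult)
  also have "\<dots> \<le> \<bar>p1 - p2\<bar> * 1 + N2 / e * \<bar>h1 - h2\<bar>"
    using a by (intro add_mono mult_left_mono mult_right_mono) auto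
  finally show ?thesis using True by (simp add: min_def)
next
  case False
  have "\<bar>p1 * h1 - p2 * h2\<bar> = \<bar>(p1 - p2) * h2 + p1 * (h1 - h2)\<bar>" by (simp add: algebra_simps)
  also have "\<dots> \<le> \<bar>(p1 - p2) * h2\<bar> + \<bar>p1 * (h1 - h2)\<bar>" by (rule abs_triangle_ineq)
  also have "\<dots> = \<bar>p1 - p2\<bar> * h2 + p1 * \<bar>h1 - h2\<bar>"
    using a by (simp add: abs_mult)
  also have "\<dots> \<le> \<bar>p1 - p2\<bar> * 1 + N1 / e * \<bar>h1 - h2\<bar>"
    using a by (intro add_mono mult_left_mono mult_right_mono) auto
  finally show ?thesis using False by (simp add: min_def)
qed


lemma kappa2_eq:
  fixes a b :: "real^'d" and e :: real
  assumes e: "0 < e" "e < 1"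
  shows "kappa2 e a b = min ((norm a)^2 / e) 1 *
     (if (norm a)^2 = 0 then 0 else (1 - e) * (norm a)^2 / max (- (a \<bullet> b)) ((1 - e) * (norm a)^2))"
proof (cases "(norm a)^2 = 0")
  case True
  then show ?thesis by (simp add: kappa2_def Let_def)
next
  case False
  then have N: "(norm a)^2 > 0" by simp
  have cN: "(1 - e) * (norm a)^2 > 0" using N e by simp
  show ?thesis
  proof (cases "a \<bullet> b \<ge> 0")
    case True
    then have "max (- (a \<bullet> b)) ((1 - e) * (norm a)^2) = (1 - e) * (norm a)^2" using cN by simp
    then have "(1 - e) * (norm a)^2 / max (- (a \<bullet> b)) ((1 - e) * (norm a)^2) = 1" using cN e False by simp
    then show ?thesis using True False e by (simp add: kappa2_def Let_def)
  next
    case F: False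
    have "min (- (1 - e) * (norm a)\<^sup>2 / (a \<bullet> b)) 1 = (1 - e) * (norm a)^2 / max (- (a \<bullet> b)) ((1 - e) * (norm a)^2)"
    proof (cases "- (a \<bullet> b) \<ge> (1 - e) * (norm a)^2")
      case True
      then have m: "max (- (a \<bullet> b)) ((1 - e) * (norm a)^2) = - (a \<bullet> b)" by simp
      have "(1 - e) * (norm a)^2 / (- (a \<bullet> b)) \<le> 1" using True F divide_le_eq_1_pos[of "- (a \<bullet> b)" "(1 - e) * (norm a)^2"] by linarith
      moreover have "- (1 - e) * (norm a)\<^sup>2 / (a \<bullet> b) = (1 - e) * (norm a)^2 / (- (a \<bullet> b))"
        by (simp only: divide_minus_right mult_minus_left minus_divide_left)
      ultimately show ?thesis unfolding m by simp
    next
      case T2: False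
      then have m: "max (- (a \<bullet> b)) ((1 - e) * (norm a)^2) = (1 - e) * (norm a)^2" by simp
      have "(1 - e) * (norm a)^2 / (- (a \<bullet> b)) > 1" using T2 F less_divide_eq_1_pos[of "- (a \<bullet> b)" "(1 - e) * (norm a)^2"] by linarith
      moreover have "- (1 - e) * (norm a)\<^sup>2 / (a \<bullet> b) = (1 - e) * (norm a)^2 / (- (a \<bullet> b))"
        by (simp only: divide_minus_right mult_minus_left minus_divide_left)
      ultimately show ?thesis unfolding m using cN e False by simp
    qed
    then show ?thesis using F False by (simp add: kappa2_def Let_def)
  qed
qed

lemma LL_kappa:
  fixes va vb :: "'a::metric_space \<Rightarrow> real^'d" and e :: real
  assumes va: "LL va" and vb: "LL vb" and e: "0 < e" "e < 1"
  shows "LL (\<lambda>p. kappa2 e (va p) (vb p))"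
proof -
  define c where "c = 1 - e"
  have c: "c > 0" using e by (simp add: c_def)
  define N where "N p = (norm (va p))^2" for p
  define ph where "ph p = min (N p / e) 1" for p
  define D where "D p = max (- (va p \<bullet> vb p)) (c * N p)" for p
  define h where "h p = (if N p = 0 then 0 else c * N p / D p)" for p
  have keq: "kappa2 e (va p) (vb p) = ph p * h p" for p
    unfolding kappa2_eq[OF e] ph_def h_def N_def D_def c_def ..
  have LN: "LL N" unfolding N_def by (intro LL_pow2 LL_norm va)
  have Lph: "LL ph" unfolding ph_def
    by (intro LL_min LL_const LL_divide_pos LN) (use e in auto)
  have LD: "LL D" unfolding D_def
    by (intro LL_max LL_minus LL_inner LL_mult LL_const va vb LN)
  have N0: "N p \<ge> 0" for p by (simp add: N_def)
  have DN: "D p \<ge> c * N p" for p by (simp add: D_def)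
  have hb: "0 \<le> h p \<and> h p \<le> 1" for p
  proof (cases "N p = 0")
    case True then show ?thesis by (simp add: h_def)
  next
    case False
    then have "c * N p > 0" using N0[of p] c by simp
    then have "D p > 0" using DN[of p] by linarith
    then show ?thesis using False DN[of p] \<open>c * N p > 0\<close> divide_le_eq_1_pos[of "D p" "c * N p"]
      by (simp add: h_def)
  qed
  have phb: "0 \<le> ph p \<and> ph p \<le> N p / e" for p
    using N0[of p] e by (simp add: ph_def)
  define C where "C = 1 + 1 / e + 1 / (e * c)"
  show ?thesis
  proof (rule LL_bound3[OF Lph LN LD, where C = C])
    fix y z
    let ?dp = "\<bar>ph y - ph z\<bar>" and ?dN = "\<bar>N y - N z\<bar>" and ?dD = "\<bar>D y - D z\<bar>"
    have "dist (kappa2 e (va y) (vb y)) (kappa2 e (va z) (vb z)) = \<bar>ph y * h y - ph z * h z\<bar>"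
      by (simp add: keq dist_real_def)
    also have "\<dots> \<le> ?dp + min (N y) (N z) / e * \<bar>h y - h z\<bar>"
      using hb[of y] hb[of z] phb[of y] phb[of z] e by (intro comb_real) auto
    also have "min (N y) (N z) / e * \<bar>h y - h z\<bar> = (min (N y) (N z) * \<bar>h y - h z\<bar>) / e" by simp
    also have "min (N y) (N z) * \<bar>h y - h z\<bar> \<le> ?dN + ?dD / c"
      unfolding h_def by (rule key_real[OF c N0 N0 DN DN])
    also have "?dp + (?dN + ?dD / c) / e = ?dp + ?dN / e + ?dD / (e * c)"
      by (simp add: add_divide_distrib)
    also have "\<dots> \<le> C * ?dp + C * ?dN + C * ?dD"
    proof (intro add_mono)
      have "1 \<le> C" "1 / e \<le> C" "1 / (e * c) \<le> C" using e c by (auto simp: C_def)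
      then show "?dp \<le> C * ?dp" "?dN / e \<le> C * ?dN" "?dD / (e * c) \<le> C * ?dD"
        using mult_right_mono[of 1 C ?dp] mult_right_mono[of "1/e" C ?dN] mult_right_mono[of "1/(e*c)" C ?dD]
        by auto
    qed
    finally show "dist (kappa2 e (va y) (vb y)) (kappa2 e (va z) (vb z))
        \<le> C * (dist (ph y) (ph z) + dist (N y) (N z) + dist (D y) (D z))"
      using e by (simp add: dist_real_def distrib_left divide_right_mono)
  qed
qed



lemma mass_pos: "mass \<beta> q (p::real^'d^'n::finite) k > 0"
  unfolding mass_def by (intro mult_pos_pos sum_pos) auto

lemma LL_vdiff: "LL (\<lambda>p::real^'d^'n. (q::real^'d) - p $ i)"
  by (intro LL_diff LL_const LL_nth)

lemma LL_mass: "LL (\<lambda>p::real^'d^'n::finite. mass \<beta> q p k)"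
  unfolding mass_def
  by (intro LL_mult LL_const LL_sum LL_exp LL_pow2 LL_norm LL_vdiff) auto

lemma LL_vms: "LL (\<lambda>p::real^'d^'n::finite. v_ms \<beta> \<sigma>1 q p i)"
proof -
  have pos: "0 < (\<Sum>k\<in>UNIV. 1 / mass \<beta> q p k * exp (- \<beta> * (norm (q k - p $ i))\<^sup>2))" for p :: "real^'d^'n"
    by (intro sum_pos mult_pos_pos) (auto simp: mass_pos)
  show ?thesis
    unfolding v_ms_def Let_def inverse_eq_divide
    by (intro LL_scaleR LL_inv_pos LL_sum LL_mult LL_const LL_exp LL_pow2 LL_norm LL_vdiff LL_mass pos mass_pos) auto
qed

lemma v_rep_eq:
  "v_rep \<sigma>2 \<epsilon> r p i = \<sigma>2 *\<^sub>R (\<Sum>j\<in>UNIV. if j = i then 0 else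
      (max (r - norm (p $ i - p $ j)) 0 / (norm (p $ i - p $ j) + \<epsilon>)) *\<^sub>R (p $ i - p $ j))"
  unfolding v_rep_def
  by (rule arg_cong[where f="\<lambda>x. \<sigma>2 *\<^sub>R x"], rule sum.mono_neutral_cong_left) auto

lemma LL_vrep:
  assumes e: "\<epsilon> > 0"
  shows "LL (\<lambda>p::real^'d^'n::finite. v_rep \<sigma>2 \<epsilon> r p i)"
  unfolding v_rep_eq
proof (intro LL_scaleR LL_const LL_sum)
  fix j :: 'n
  show "LL (\<lambda>p::real^'d^'n. if j = i then 0 else
      (max (r - norm (p $ i - p $ j)) 0 / (norm (p $ i - p $ j) + \<epsilon>)) *\<^sub>R (p $ i - p $ j))"
  proof (cases "j = i")
    case True then show ?thesis by (simp add: LL_const)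
  next
    case False
    have d: "LL (\<lambda>p::real^'d^'n. p $ i - p $ j)" by (intro LL_diff LL_nth)
    have "LL (\<lambda>p::real^'d^'n. (max (r - norm (p $ i - p $ j)) 0 / (norm (p $ i - p $ j) + \<epsilon>)) *\<^sub>R (p $ i - p $ j))"
      by (intro LL_scaleR LL_divide_pos LL_max LL_diff LL_add LL_const LL_norm d)
         (use e in \<open>auto intro: add_nonneg_pos\<close>)
    then show ?thesis using False by simp
  qed
qed simp

lemma sat_eq: "v > 0 \<Longrightarrow> sat v z = (v / max (norm z) v) *\<^sub>R z"
  by (auto simp: sat_def max_def)

lemma LL_sat: "v > 0 \<Longrightarrow> LL (\<lambda>z. sat v z)"
  unfolding sat_eq
  by (intro LL_scaleR LL_divide_pos LL_const LL_max LL_norm LL_id) auto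

theorem lemma7:
  fixes q :: "'k::finite \<Rightarrow> real^'d"
    and \<beta> \<sigma>1 \<sigma>2 \<epsilon> r_avoid v_max :: real
    and i :: "'n::finite"
  assumes "CARD('n) \<ge> 2"
    and "\<beta> > 0" and "\<sigma>1 > 0" and "\<sigma>2 > 0"
    and "0 < \<epsilon>" and "\<epsilon> < 1"
    and "r_avoid > 0" and "v_max > 0"
  shows "locally_lipschitz_on (UNIV :: (real^'d^'n) set)
           (\<lambda>p. control \<beta> \<sigma>1 \<sigma>2 \<epsilon> r_avoid v_max q p i)"
proof -
  have "LL (\<lambda>p::real^'d^'n. control \<beta> \<sigma>1 \<sigma>2 \<epsilon> r_avoid v_max q p i)"
    unfolding control_def v_cv_def
    by (intro LL_compose[OF _ LL_sat] LL_add LL_scaleR LL_kappa LL_vms LL_vrep assms)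
  then show ?thesis unfolding locally_lipschitz_on_def LL_def by simp
qed

end
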